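(* Let $m \equiv 3 \pmod 4$ with $m > 3$, $n = 3^m - 1$, $v = (3^{(m+1)/2}+1)/2$ and $\delta = (3^{(m-1)/2}+7)/2$. Then $\gcd(v,n) = 1$, and, setting $T_{(2,3,m)}(v) = \{ vi \bmod n : i \in T_{(2,3,m)}\}$, we have $\{n-(\delta-1), \ldots, n-2, n-1\} \subseteq T_{(2,3,m)}(v)$.
   Context: For an integer $0 \le j \le n-1$ with $3$-adic expansion $j = \sum_{t=0}^{m-1} j_t 3^t$, $j_t \in \{0,1,2\}$, let $w_3(j) = \sum_{t=0}^{m-1} j_t$. For distinct $i_1,i_2 \in \{0,1,2,3\}$, $T_{(i_1,i_2,m)} = \{1 \le j \le n-1 : w_3(j) \equiv i_1 \text{ or } i_2 \pmod 4\}$. For an integer $b$, $b \bmod n$ is the unique $b_0 \in \{0,\ldots,n-1\}$ with $b \equiv b_0 \pmod n$. *)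

theory Defs
  imports Main
begin

fun w3 :: "nat \<Rightarrow> nat" where
  "w3 j = (if j = 0 then 0 else j mod 3 + w3 (j div 3))"

definition T_set :: "nat \<Rightarrow> nat \<Rightarrow> nat \<Rightarrow> nat set" where
  "T_set i1 i2 m = {j. 1 \<le> j \<and> j \<le> 3 ^ m - 2 \<and>
                       (w3 j mod 4 = i1 \<or> w3 j mod 4 = i2)}"

definition T_mult :: "nat \<Rightarrow> nat \<Rightarrow> nat \<Rightarrow> nat \<Rightarrow> nat set" where
  "T_mult i1 i2 m v = (\<lambda>i. (v * i) mod (3 ^ m - 1)) ` T_set i1 i2 m"

end

theory Submission imports Defs begin
declare w3.simps[simp del]
lemma w3_eq: "w3 x = x mod 3 + w3 (x div 3)"
  by (cases "x = 0") (simp_all add: w3.simps)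
lemma w3_0[simp]: "w3 0 = 0" by (simp add: w3.simps)
lemma w3_1[simp]: "w3 1 = 1" by (simp add: w3.simps)
lemma w3_Suc0[simp]: "w3 (Suc 0) = Suc 0" by (simp add: w3.simps)
lemma w3_shift: "b < 3^j \<Longrightarrow> w3 (a*3^j + b) = w3 a + w3 b"
proof (induction j arbitrary: b)
  case 0 then show ?case by simp
next
  case (Suc j)
  have e: "a*3^Suc j + b = b + 3*(a*3^j)" by simp
  have "w3 (a*3^Suc j + b) = b mod 3 + w3 ((a*3^Suc j + b) div 3)"
    by (subst w3_eq) (simp only: e mod_mult_self2)
  also have "(a*3^Suc j + b) div 3 = a*3^j + b div 3" by (simp add: e)
  also have "w3 (a*3^j + b div 3) = w3 a + w3 (b div 3)"
    using Suc by (intro Suc.IH) (simp add: less_mult_imp_div_less)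
  finally show ?case by (subst (2) w3_eq) simp
qed
lemma w3_compl: "x + y = 3^k - 1 \<Longrightarrow> w3 x + w3 y = 2*k"
proof (induction k arbitrary: x y)
  case 0 then show ?case by simp
next
  case (Suc k)
  obtain K where K: "K = (3::nat)^k" by simp
  have K1: "K \<ge> 1" using K by simp
  have xy: "x + y = 3*K - 1" using Suc.prems K by simp
  obtain a x0 where ax: "x = 3*a + x0" "x0 < 3" "a = x div 3" "x0 = x mod 3" by simp
  obtain b y0 where bx: "y = 3*b + y0" "y0 < 3" "b = y div 3" "y0 = y mod 3" by simp
  have xy1: "x + y + 1 = 3*K" using xy K1 by arith
  have eq: "3*(a+b) + (x0+y0+1) = 3*K" using xy1 ax(1) bx(1) by simp
  have m1: "(x0+y0+1 + 3*(a+b)) mod 3 = (x0+y0+1) mod 3" by (simp only: mod_mult_self2)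
  have m2: "(x0+y0+1 + 3*(a+b)) mod 3 = 0" using eq by (simp add: add.commute)
  have "(x0+y0+1) mod 3 = 0" using m1 m2 by simp
  moreover have "x0 + y0 \<le> 4" using ax(2) bx(2) by linarith
  moreover have "x0 + y0 = 0 \<or> x0 + y0 = 1 \<or> x0 + y0 = 2 \<or> x0 + y0 = 3 \<or> x0 + y0 = 4"
    using ax(2) bx(2) by linarith
  ultimately have c2: "x0 + y0 = 2" by (elim disjE) simp_all
  have "3*(a+b+1) = 3*K" using c2 eq by simp
  then have "a+b+1 = K" by simp
  then have h: "x0 + y0 = 2 \<and> a + b = K - 1" using c2 by simp
  then have "x div 3 + y div 3 = 3^k - 1" using K ax(3) bx(3) by simp
  from Suc.IH[OF this] h ax(3,4) bx(3,4) show ?case by (subst (1 2) w3_eq) simp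
qed
lemma mod_lem: "(a::nat) + t = c*N \<Longrightarrow> 0<t \<Longrightarrow> t \<le> N \<Longrightarrow> a mod N = N - t"
proof -
  assume h: "a + t = c*N" "0<t" "t \<le> N"
  have "c \<noteq> 0" using h by (metis add_is_0 mult_is_0 neq0_conv)
  then obtain d where c: "c = Suc d" using not0_implies_Suc by blast
  have "a + t = d*N + N" using h(1) c by simp
  then have e: "a = d*N + (N - t)" using h(3) by linarith
  have "N - t < N" using h by linarith
  then show ?thesis unfolding e by (simp add: mod_mult_self3)
qed

lemma fin_lem: "(v::nat)*i + t = c*N \<Longrightarrow> 0<t \<Longrightarrow> t \<le> N \<Longrightarrow> c \<le> v \<Longrightarrow> 1 \<le> i
  \<Longrightarrow> 1 \<le> i \<and> i \<le> N - 1 \<and> v*i mod N = N - t"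
proof -
  assume h: "v*i + t = c*N" "0<t" "t \<le> N" "c \<le> v" "1 \<le> i"
  have "v*i < c*N" using h by linarith
  also have "c*N \<le> v*N" using h by simp
  finally have "i < N" by simp
  then show ?thesis using h mod_lem[OF h(1-3)] by simp
qed

lemma key:
  fixes k X r t :: nat
  assumes X: "3^k = X" "X = 4*r+3" and ok: "odd k" and r1: "r \<ge> 1" and t: "1 \<le> t" "t \<le> 2*r+4"
  shows "\<exists>i. 1 \<le> i \<and> i \<le> 3*X^2 - 2 \<and> (w3 i mod 4 = 2 \<or> w3 i mod 4 = 3)
            \<and> (6*r+5)*i mod (3*X^2-1) = 3*X^2-1-t"
proof -
  have N: "int (3*X^2-1) = 3*(int X)^2 - 1" using X by (simp add: of_nat_diff)
  have XX: "X \<le> X^2" by (simp add: power2_eq_square)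
  have tN: "t \<le> 3*X^2-1" using X t XX by linarith
  have k2: "2*k mod 4 = 2" using ok by presburger
  have "(\<exists>s. t = 2*s \<and> 1 \<le> s \<and> s \<le> r+2) \<or> (\<exists>s. t = 2*s+1 \<and> s \<le> r) \<or> t = 2*r+3"
    using t by presburger
  then consider (ev) s where "t = 2*s" "1 \<le> s" "s \<le> r+2"
    | (od) s where "t = 2*s+1" "s \<le> r"
    | (ex) "t = 2*r+3"
    by blast
  then show ?thesis
  proof cases
    case ev
    define i where "i = (X-t)*(3*X) + (t-1)"
    have tx: "t \<le> X" using ev X r1 by linarith
    have w: "w3 i = 2*k"
    proof -
      have e1: "i = (X-t)*3^(Suc k) + (t-1)" using i_def X by simp
      have l1: "t - 1 < 3^(Suc k)" using X tx by simp
      have "w3 i = w3 (X-t) + w3 (t-1)" unfolding e1 by (rule w3_shift[OF l1])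
      moreover have "(X-t) + (t-1) = 3^k - 1" using X tx t by simp
      ultimately show ?thesis using w3_compl by simp
    qed
    have id: "(6*r+5)*i + t = (6*r+5-3*s)*(3*X^2-1)"
    proof -
      have ia: "int (X - t) = 4*int r + 3 - 2*int s" using tx X ev by (simp add: of_nat_diff)
      have ib: "int (t - 1) = 2*int s - 1" using ev by (simp add: of_nat_diff)
      have ic: "int (6*r+5-3*s) = 6*int r + 5 - 3*int s" using ev r1 by (simp add: of_nat_diff)
      have iN: "int (3*X^2-1) = 3*(4*int r+3)^2 - 1" using N X by simp
      have l: "int ((6*r+5)*i + t) = (6*int r+5)*((4*int r+3-2*int s)*(3*(4*int r+3)) + (2*int s-1)) + 2*int s"
        unfolding i_def of_nat_add of_nat_mult ia ib using X ev by simp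
      have r: "int ((6*r+5-3*s)*(3*X^2-1)) = (6*int r + 5 - 3*int s)*(3*(4*int r+3)^2 - 1)"
        unfolding of_nat_mult ic iN by simp
      have "int ((6*r+5)*i + t) = int ((6*r+5-3*s)*(3*X^2-1))"
        unfolding l r by (simp add: power2_eq_square ring_distribs)
      then show ?thesis by (simp only: of_nat_eq_iff)
    qed
    have i1: "1 \<le> i" using i_def ev by simp
    have c: "6*r+5-3*s \<le> 6*r+5" by simp
    have tp: "0 < t" using t by simp
    have A: "1 \<le> i \<and> i \<le> 3*X^2-1-1 \<and> (6*r+5)*i mod (3*X^2-1) = 3*X^2-1-t"
      using fin_lem[OF id tp tN c i1] .
    have wm: "w3 i mod 4 = 2" using w k2 by simp
    have B: "i \<le> 3*X^2-2" using A by linarith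
    show ?thesis using A B wm by blast
  next
    case od
    define i where "i = ((2*r+1-t)*3+1)*X + (2*r+1+t)"
    have w: "w3 i = 2*k+1"
    proof -
      have e1: "i = ((2*r+1-t)*3^1+1)*3^k + (2*r+1+t)" using i_def X by simp
      have l1: "2*r+1+t < 3^k" using X od by simp
      have "w3 i = w3 ((2*r+1-t)*3^1+1) + w3 (2*r+1+t)" unfolding e1 by (rule w3_shift[OF l1])
      also have "w3 ((2*r+1-t)*3^1+1) = w3 (2*r+1-t) + 1" by (subst w3_shift) simp_all
      finally have "w3 i = w3 (2*r+1-t) + w3 (2*r+1+t) + 1" by simp
      moreover have "(2*r+1-t) + (2*r+1+t) = 3^k - 1" using X od by simp
      ultimately show ?thesis using w3_compl by simp
    qed
    have id: "(6*r+5)*i + t = (3*r+1-3*s)*(3*X^2-1)"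
    proof -
      have ia: "int (2*r+1-t) = 2*int r - 2*int s" using od by (simp add: of_nat_diff)
      have ic: "int (3*r+1-3*s) = 3*int r + 1 - 3*int s" using od by (simp add: of_nat_diff)
      have iN: "int (3*X^2-1) = 3*(4*int r+3)^2 - 1" using N X by simp
      have l: "int ((6*r+5)*i + t) = (6*int r+5)*(((2*int r - 2*int s)*3+1)*(4*int r+3) + (2*int r+1+(2*int s+1))) + (2*int s+1)"
        unfolding i_def of_nat_add of_nat_mult ia using X od by simp
      have r: "int ((3*r+1-3*s)*(3*X^2-1)) = (3*int r + 1 - 3*int s)*(3*(4*int r+3)^2 - 1)"
        unfolding of_nat_mult ic iN by simp
      have "int ((6*r+5)*i + t) = int ((3*r+1-3*s)*(3*X^2-1))"
        unfolding l r by (simp add: power2_eq_square ring_distribs)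
      then show ?thesis by (simp only: of_nat_eq_iff)
    qed
    have i1: "1 \<le> i" using i_def X by simp
    have c: "3*r+1-3*s \<le> 6*r+5" by simp
    have tp: "0 < t" using t by simp
    have A: "1 \<le> i \<and> i \<le> 3*X^2-1-1 \<and> (6*r+5)*i mod (3*X^2-1) = 3*X^2-1-t"
      using fin_lem[OF id tp tN c i1] .
    have wm: "w3 i mod 4 = 3" using w k2 by presburger
    have B: "i \<le> 3*X^2-2" using A by linarith
    show ?thesis using A B wm by blast
  next
    case ex
    define i where "i = ((X-2)*3+2)*X"
    have w: "w3 i = 2*k+1"
    proof -
      have e1: "i = ((X-2)*3^1+2)*3^k + 0" using i_def X by simp
      have "w3 i = w3 ((X-2)*3^1+2) + w3 0" unfolding e1 by (rule w3_shift) simp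
      also have "\<dots> = w3 (X-2) + w3 2" by (subst w3_shift) simp_all
      finally have "w3 i = w3 (X-2) + w3 2" .
      moreover have "w3 2 = 2" by (subst w3_eq) simp
      moreover have "(X-2) + 1 = 3^k - 1" using X by simp
      ultimately show ?thesis using w3_compl[of "X-2" 1 k] by simp
    qed
    have id: "(6*r+5)*i + t = (6*r+3)*(3*X^2-1)"
    proof -
      have ia: "int (X-2) = 4*int r + 1" using X by (simp add: of_nat_diff)
      have iN: "int (3*X^2-1) = 3*(4*int r+3)^2 - 1" using N X by simp
      have l: "int ((6*r+5)*i + t) = (6*int r+5)*(((4*int r + 1)*3+2)*(4*int r+3)) + (2*int r+3)"
        unfolding i_def of_nat_add of_nat_mult ia using X ex by simp
      have r: "int ((6*r+3)*(3*X^2-1)) = (6*int r + 3)*(3*(4*int r+3)^2 - 1)"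
        unfolding of_nat_mult iN by simp
      have "int ((6*r+5)*i + t) = int ((6*r+3)*(3*X^2-1))"
        unfolding l r by (simp add: power2_eq_square ring_distribs)
      then show ?thesis by (simp only: of_nat_eq_iff)
    qed
    have i1: "1 \<le> i" using i_def X by simp
    have c: "6*r+3 \<le> 6*r+5" by simp
    have tp: "0 < t" using t by simp
    have A: "1 \<le> i \<and> i \<le> 3*X^2-1-1 \<and> (6*r+5)*i mod (3*X^2-1) = 3*X^2-1-t"
      using fin_lem[OF id tp tN c i1] .
    have wm: "w3 i mod 4 = 3" using w k2 by presburger
    have B: "i \<le> 3*X^2-2" using A by linarith
    show ?thesis using A B wm by blast
  qed
qed

theorem lemma8:
  fixes m n v \<delta> :: nat
  assumes "m mod 4 = 3" and "m > 3"
    and "n = 3 ^ m - 1"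
    and "v = (3 ^ ((m + 1) div 2) + 1) div 2"
    and "\<delta> = (3 ^ ((m - 1) div 2) + 7) div 2"
  shows "gcd v n = 1 \<and> {n - (\<delta> - 1) .. n - 1} \<subseteq> T_mult 2 3 m v"
proof -
  define q where "q = m div 4"
  define k where "k = 2*q+1"
  have mq: "m = 4*q + 3" using div_mult_mod_eq[of m 4] assms(1) unfolding q_def by linarith
  then have m: "m = 2*k+1" unfolding k_def by simp
  have ok: "odd k" unfolding k_def by simp
  have "q \<ge> 1" using mq assms(2) by linarith
  then have k3: "k \<ge> 3" unfolding k_def by simp
  define X where "X = (3::nat)^k"
  have "X mod 4 = 3"
  proof -
    obtain j where "k = 2*j+1" using k_def by blast
    then have "X = 3*9^j" unfolding X_def by (simp add: power_mult)
    moreover have "(9::nat)^j mod 4 = 1"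
    proof -
      have "(9::nat)^j mod 4 = (9 mod 4)^j mod 4" by (rule power_mod[symmetric])
      then show ?thesis by simp
    qed
    moreover have "3 * 9^j mod 4 = 3 * ((9::nat)^j mod 4) mod 4" by (simp only: mod_mult_right_eq)
    ultimately show ?thesis by simp
  qed
  then obtain r where Xr: "X = 4*r+3" by (metis div_mult_mod_eq add.commute mult.commute)
  have "X \<ge> 27" unfolding X_def using power_increasing[OF k3, of "3::nat"] by simp
  then have r1: "r \<ge> 1" using Xr by simp
  have m3: "(3::nat)^m = 3*X^2" unfolding m X_def by (simp add: power_add mult.commute flip: power_mult)
  have n: "n = 3*X^2 - 1" using assms(3) m3 by simp
  have e1: "(m+1) div 2 = k+1" "(m-1) div 2 = k" using m by simp_all
  have p1: "(3::nat)^((m+1) div 2) = 3*X" unfolding e1 X_def by simp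
  have p2: "(3::nat)^((m-1) div 2) = X" unfolding e1 X_def by simp
  have "v = (3*X+1) div 2" by (simp only: assms(4) p1)
  also have "3*X+1 = 2*(6*r+5)" using Xr by simp
  finally have v: "v = 6*r+5" by simp
  have "\<delta> = (X+7) div 2" by (simp only: assms(5) p2)
  also have "X+7 = 2*(2*r+5)" using Xr by simp
  finally have d: "\<delta> = 2*r+5" by simp
  have g: "gcd v n = 1"
  proof -
    have in1: "int n = 3*(int X)^2 - 1" using n Xr by (simp add: of_nat_diff)
    have iv: "int v = 6*int r+5" using v by simp
    have iX: "int X = 4*int r+3" using Xr by simp
    have e0: "(6*int r+5) * (3*(4*int r+3) - 1) * 2 = 3 * (3*(4*int r+3)^2 - 1) + 2"
      by (simp add: power2_eq_square ring_distribs)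
    have e: "int v * (3*int X - 1) * 2 = 3 * int n + 2" unfolding in1 iv iX by (rule e0)
    define g where "g = gcd (int v) (int n)"
    have "g dvd int v * (3*int X - 1) * 2 - 3 * int n" unfolding g_def by simp
    then have g2: "g dvd 2" using e by simp
    have "g \<le> 2" using zdvd_imp_le[OF g2] by simp
    moreover have "g \<ge> 0" unfolding g_def by simp
    moreover have "odd g"
    proof
      assume "even g"
      moreover have "g dvd int v" unfolding g_def by simp
      ultimately have "2 dvd int v" by (rule dvd_trans)
      then show False using v by simp
    qed
    ultimately have "g = 1" by (smt (verit) dvd_refl odd_numeral even_zero)
    then have "gcd (int v) (int n) = 1" unfolding g_def .
    then show ?thesis by (metis gcd_int_int_eq of_nat_eq_1_iff)
  qed
  have "{n - (\<delta> - 1) .. n - 1} \<subseteq> T_mult 2 3 m v"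
  proof
    fix x assume x: "x \<in> {n - (\<delta> - 1) .. n - 1}"
    define t where "t = n - x"
    have XX: "X \<le> X^2" by (simp add: power2_eq_square)
    have big: "2*r+4 < n" using n Xr XX by linarith
    have t: "1 \<le> t" "t \<le> 2*r+4" using x d big unfolding t_def by auto
    obtain i where i: "1 \<le> i" "i \<le> 3*X^2 - 2" "w3 i mod 4 = 2 \<or> w3 i mod 4 = 3"
      "(6*r+5)*i mod (3*X^2-1) = 3*X^2-1-t"
      using key[OF X_def[symmetric] Xr ok r1 t] by blast
    have "x = n - t" using x big d unfolding t_def by auto
    then have "x = v * i mod (3^m - 1)" using i(4) n v m3 by simp
    moreover have "i \<in> T_set 2 3 m" unfolding T_set_def using i m3 by auto
    ultimately show "x \<in> T_mult 2 3 m v" unfolding T_mult_def by blast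
  qed
  with g show ?thesis by simp
qed

end
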